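(* Let two vehicles $i$ and $j$ move in the plane according to dynamics $(\dot{\boldsymbol\xi},\dot{\boldsymbol\zeta})^{\mathsf T}=F(t,\boldsymbol\xi,\boldsymbol\zeta)$ with bounded velocity and acceleration, as described in the context. Fix a time $t_\circ$ and assume that, for $t\ge t_\circ$, the trajectory $t\mapsto \mathbf p_k(t)$ of each vehicle $k\in\{i,j\}$ is given either by the straight-line model or by the circular model described in the context. Let $d_{ij}(t)=\|\mathbf p_i(t)-\mathbf p_j(t)\|_2$, let $\phi>0$, and let $$\mathcal T_S=\inf\{t\ge t_\circ:\ d_{ij}(t)-\phi\le 0\}.$$ If $\mathcal T_S<\infty$, then there exists $\check t$ with $t_\circ\le \check t<\mathcal T_S$ such that $t\mapsto d_{ij}(t)-\phi$ is strictly decreasing on $[\check t,\mathcal T_S)$.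
   Context: Each vehicle has position $\boldsymbol\xi(t)\in\mathbb R^2$ and velocity $\boldsymbol\zeta(t)\in\mathbb R^2$ obeying $(\dot{\boldsymbol\xi},\dot{\boldsymbol\zeta})^{\mathsf T}=F(t,\boldsymbol\xi,\boldsymbol\zeta)$ with $F:\mathbb R_+\times\mathbb R^2\times\mathbb R^2\to\mathbb R^4$ smooth enough that the solution exists uniquely up to the collision time $\mathcal T$, and with $\boldsymbol\zeta\in C^1([0,\mathcal T);B(0,v_{\max}))$, $\dot{\boldsymbol\zeta}\in C([0,\mathcal T);B(0,a_{\max}))$ (bounded velocity and acceleration; $B(x,r)$ is the open Euclidean ball). Vehicles are modeled as disks of common diameter $\phi$, so a collision means $d_{ij}\le\phi$. At time $t_\circ$ set $(\mathbf p_\circ,\mathbf v_\circ,\mathbf a_\circ)=(\boldsymbol\xi(t_\circ),\boldsymbol\zeta(t_\circ),\dot{\boldsymbol\zeta}(t_\circ))$ for each vehicle, $\mathbf v_*=\mathbf v_\circ/\|\mathbf v_\circ\|_2=(v_{*x},v_{*y})$, $\mathbf v_\perp=(-v_{*y},v_{*x})$, longitudinal acceleration $a_f=\mathbf a_\circ\cdot\mathbf v_*$ and lateral acceleration $a_s=\mathbf a_\circ\cdot\mathbf v_\perp$. Straight-line model (used when $a_s$ is zero or negligible): $\mathbf p(t)=\mathbf p_\circ+\mathbf v_\circ(t-t_\circ)+\tfrac12\mathbf a_\circ(t-t_\circ)^2$, $\mathbf v(t)=\mathbf v_\circ+\mathbf a_\circ(t-t_\circ)$, $\mathbf a(t)\equiv\mathbf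 a_\circ$. Circular model (used when $a_s\neq0$): $r=\|\mathbf v_\circ\|_2^2/|a_s|$, $\omega_0=a_s/\|\mathbf v_\circ\|_2$, center $\mathbf c=\mathbf p_\circ+r\,\mathrm{sgn}(a_s)\mathbf v_\perp$, initial phase $\alpha_0=\mathrm{sgn}(p_{\circ,y}-c_y)\arccos\big((p_{\circ,x}-c_x)/r\big)$, where $\mathrm{sgn}(z)=1$ if $z\ge0$ and $-1$ otherwise; $\omega(t)=\min\{0,\omega_0+\tfrac{a_f}{2r}(t-t_\circ)\}$ if $\omega_0<0$ and $\omega(t)=\max\{0,\omega_0+\tfrac{a_f}{2r}(t-t_\circ)\}$ if $\omega_0>0$; and $\mathbf p(t)=\mathbf c+r\big(\cos(\alpha_0+\omega(t)(t-t_\circ)),\ \sin(\alpha_0+\omega(t)(t-t_\circ))\big)$ for $t\ge t_\circ$. *)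

theory Defs
  imports "HOL-Analysis.Analysis"
begin

text \<open>Points of the plane are pairs of reals; the norm on real \<times> real is the Euclidean norm.\<close>

definition sgnp :: "real \<Rightarrow> real" where
  "sgnp z = (if z \<ge> 0 then 1 else -1)"

definition vstar :: "real \<times> real \<Rightarrow> real \<times> real" where
  "vstar v = (1 / norm v) *\<^sub>R v"

definition vperp :: "real \<times> real \<Rightarrow> real \<times> real" where
  "vperp v = (- snd (vstar v), fst (vstar v))"

definition long_acc :: "real \<times> real \<Rightarrow> real \<times> real \<Rightarrow> real" where
  "long_acc v a = a \<bullet> vstar v"

definition lat_acc :: "real \<times> real \<Rightarrow> real \<times> real \<Rightarrow> real" where
  "lat_acc v a = a \<bullet> vperp v"

definition straight_pos ::
  "real \<Rightarrow> real \<times> real \<Rightarrow> real \<times> real \<Rightarrow> real \<times> real \<Rightarrow> real \<Rightarrow> real \<times> real" where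
  "straight_pos t0 p0 v0 a0 t = p0 + (t - t0) *\<^sub>R v0 + ((t - t0)\<^sup>2 / 2) *\<^sub>R a0"

definition circ_radius :: "real \<times> real \<Rightarrow> real \<times> real \<Rightarrow> real" where
  "circ_radius v0 a0 = (norm v0)\<^sup>2 / \<bar>lat_acc v0 a0\<bar>"

definition circ_omega0 :: "real \<times> real \<Rightarrow> real \<times> real \<Rightarrow> real" where
  "circ_omega0 v0 a0 = lat_acc v0 a0 / norm v0"

definition circ_center :: "real \<times> real \<Rightarrow> real \<times> real \<Rightarrow> real \<times> real \<Rightarrow> real \<times> real" where
  "circ_center p0 v0 a0 = p0 + (circ_radius v0 a0 * sgnp (lat_acc v0 a0)) *\<^sub>R vperp v0"

definition circ_alpha0 :: "real \<times> real \<Rightarrow> real \<times> real \<Rightarrow> real \<times> real \<Rightarrow> real" where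
  "circ_alpha0 p0 v0 a0 =
     (let c = circ_center p0 v0 a0 in
      sgnp (snd p0 - snd c) * arccos ((fst p0 - fst c) / circ_radius v0 a0))"

definition circ_omega :: "real \<Rightarrow> real \<times> real \<Rightarrow> real \<times> real \<Rightarrow> real \<Rightarrow> real" where
  "circ_omega t0 v0 a0 t =
     (let w = circ_omega0 v0 a0 + long_acc v0 a0 / (2 * circ_radius v0 a0) * (t - t0) in
      if circ_omega0 v0 a0 < 0 then min 0 w else max 0 w)"

definition circ_pos ::
  "real \<Rightarrow> real \<times> real \<Rightarrow> real \<times> real \<Rightarrow> real \<times> real \<Rightarrow> real \<Rightarrow> real \<times> real" where
  "circ_pos t0 p0 v0 a0 t =
     (let \<theta> = circ_alpha0 p0 v0 a0 + circ_omega t0 v0 a0 t * (t - t0) in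
      circ_center p0 v0 a0 + circ_radius v0 a0 *\<^sub>R (cos \<theta>, sin \<theta>))"

definition model_traj ::
  "real \<Rightarrow> real \<times> real \<Rightarrow> real \<times> real \<Rightarrow> real \<times> real \<Rightarrow> (real \<Rightarrow> real \<times> real) \<Rightarrow> bool" where
  "model_traj t0 p0 v0 a0 P \<longleftrightarrow>
     (\<forall>t\<ge>t0. P t = straight_pos t0 p0 v0 a0 t) \<or>
     (v0 \<noteq> 0 \<and> lat_acc v0 a0 \<noteq> 0 \<and> (\<forall>t\<ge>t0. P t = circ_pos t0 p0 v0 a0 t))"

end

theory Submission
  imports Defs "HOL-Complex_Analysis.Complex_Analysis"
begin

lemma core:
  fixes G :: "complex \<Rightarrow> complex" and g :: "real \<Rightarrow> real"
  assumes holG: "G holomorphic_on UNIV" and aT: "a < T"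
    and eq: "\<And>t. t \<in> {a..T} \<Longrightarrow> G (of_real t) = of_real (g t)"
    and pos: "\<And>t. t \<in> {a..<T} \<Longrightarrow> g t > 0" and gT: "g T \<le> 0"
  shows "\<exists>c. a \<le> c \<and> c < T \<and> (\<forall>s t. c \<le> s \<and> s < t \<and> t < T \<longrightarrow> g t < g s)"
proof -
  define G' where "G' = deriv G"
  have dG: "\<And>z. (G has_field_derivative G' z) (at z)"
    unfolding G'_def using holG by (meson UNIV_I holomorphic_derivI open_UNIV)
  have holG': "G' holomorphic_on UNIV"
    unfolding G'_def using holG by (simp add: holomorphic_deriv)
  define h where "h t = Re (G (of_real t))" for t
  define h' where "h' t = Re (G' (of_real t))" for t
  have dh: "(h has_real_derivative h' t) (at t)" for t
  proof -
    have "((\<lambda>x. G (of_real x)) has_vector_derivative G' (of_real t)) (at t)"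
      by (rule has_vector_derivative_real_field[OF dG])
    from bounded_linear.has_vector_derivative[OF bounded_linear_Re this]
    show ?thesis unfolding h_def h'_def has_real_derivative_iff_has_vector_derivative .
  qed
  have hg: "h t = g t" if "t \<in> {a..T}" for t using eq[OF that] by (simp add: h_def)
  have im0: "Im (G' (of_real t)) = 0" if "t \<in> {a<..<T}" for t
  proof -
    have "((\<lambda>x. G (of_real x)) has_vector_derivative G' (of_real t)) (at t)"
      by (rule has_vector_derivative_real_field[OF dG])
    from bounded_linear.has_vector_derivative[OF bounded_linear_Im this]
    have d: "((\<lambda>x. Im (G (of_real x))) has_real_derivative Im (G' (of_real t))) (at t)"
      unfolding has_real_derivative_iff_has_vector_derivative .
    show ?thesis
    proof (rule DERIV_local_const[OF d, of "min (t - a) (T - t)"])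
      show "0 < min (t - a) (T - t)" using that by auto
      show "\<forall>y. \<bar>t - y\<bar> < min (t - a) (T - t) \<longrightarrow> Im (G (complex_of_real t)) = Im (G (complex_of_real y))"
      proof (intro allI impI)
        fix y assume "\<bar>t - y\<bar> < min (t - a) (T - t)"
        then have "t \<in> {a..T}" "y \<in> {a..T}" using that by auto
        then show "Im (G (complex_of_real t)) = Im (G (complex_of_real y))" by (simp add: eq)
      qed
    qed
  qed
  have contG': "continuous_on UNIV G'" using holG' holomorphic_on_imp_continuous_on by blast
  have conth': "continuous_on UNIV h'"
    unfolding h'_def by (intro continuous_intros continuous_on_compose2[OF contG']) auto
  have "\<exists>d>0. \<forall>t. T - d < t \<and> t < T \<longrightarrow> G' (of_real t) \<noteq> 0"
  proof (rule ccontr)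
    assume H: "\<not> ?thesis"
    define U where "U = {z. \<exists>t. z = complex_of_real t \<and> a < t \<and> t < T \<and> G' z = 0}"
    have "complex_of_real T islimpt U"
    proof (rule islimptI)
      fix S assume "complex_of_real T \<in> S" "open S"
      then obtain e where e: "e > 0" "ball (complex_of_real T) e \<subseteq> S"
        using open_contains_ball by blast
      have "min e (T - a) > 0" using e aT by simp
      with H obtain t where t: "T - min e (T - a) < t" "t < T" "G' (of_real t) = 0"
        by blast
      have "complex_of_real t \<in> U" using t unfolding U_def by auto
      moreover have "complex_of_real t \<in> S"
      proof -
        have "dist (complex_of_real T) (complex_of_real t) < e"
          using t by (simp add: dist_norm flip: of_real_diff)
        then show ?thesis using e by auto
      qed
      moreover have "complex_of_real t \<noteq> complex_of_real T" using t by simp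
      ultimately show "\<exists>y\<in>U. y \<in> S \<and> y \<noteq> complex_of_real T" by blast
    qed
    then have z: "G' w = 0" for w
      by (rule analytic_continuation[OF holG' open_UNIV connected_UNIV subset_UNIV UNIV_I])
        (auto simp: U_def)
    have "\<exists>c. \<forall>x\<in>UNIV. G x = c"
      by (rule has_field_derivative_zero_constant) (use dG z in auto)
    then have "G (of_real a) = G (of_real T)" by auto
    then have "g a = g T" using aT by (simp add: eq)
    with pos[of a] aT gT show False by auto
  qed
  then obtain d where d: "d > 0" "\<And>t. T - d < t \<Longrightarrow> t < T \<Longrightarrow> G' (of_real t) \<noteq> 0" by blast
  define c where "c = max a (T - d)"
  have h'nz: "h' t \<noteq> 0" if "c < t" "t < T" for t
  proof
    assume "h' t = 0"
    moreover have "Im (G' (of_real t)) = 0" using im0 that by (auto simp: c_def)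
    ultimately have "G' (of_real t) = 0" by (simp add: h'_def complex_eq_iff)
    with d that show False by (auto simp: c_def)
  qed
  have h'neg: "h' t < 0" if "c < t" "t < T" for t
  proof (rule ccontr)
    assume "\<not> h' t < 0"
    with h'nz that have ht: "h' t > 0" by force
    obtain u where u: "t < u" "u < T" "h T - h t = (T - t) * h' u"
      using MVT2[OF \<open>t < T\<close>, of h h'] dh by blast
    have "h T \<le> 0" using gT hg aT by auto
    moreover have "h t > 0" using that pos hg by (auto simp: c_def)
    ultimately have "(T - t) * h' u < 0" using u by linarith
    then have "h' u < 0" using u by (simp add: mult_less_0_iff)
    then obtain v where v: "t \<le> v" "v \<le> u" "h' v = 0"
      using IVT2'[of h' u 0 t] ht u conth' by (force intro: continuous_on_subset)
    with h'nz[of v] that u show False by auto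
  qed
  show ?thesis
  proof (intro exI conjI allI impI)
    show "a \<le> c" "c < T" using d aT by (auto simp: c_def)
    fix s t assume st: "c \<le> s \<and> s < t \<and> t < T"
    obtain u where u: "s < u" "u < t" "h t - h s = (t - s) * h' u"
      using MVT2[of s t h h'] dh st by blast
    have "h' u < 0" using h'neg u st by auto
    moreover have "(t - s) * h' u < 0" using calculation u by (simp add: mult_pos_neg)
    ultimately have "h t < h s" using u by linarith
    moreover have "s \<in> {a..T}" "t \<in> {a..T}" using st by (auto simp: c_def)
    ultimately show "g t < g s" using hg by auto
  qed
qed
lemma clip_min:
  fixes w0 k t0 T :: real
  assumes "t0 < T"
  shows "\<exists>a m. t0 \<le> a \<and> a < T \<and> (\<forall>t\<in>{a..T}. min 0 (w0 + k*(t-t0)) = m * (w0 + k*(t-t0)))"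
proof -
  have A: ?thesis if "k \<ge> 0" "w0 + k*(T-t0) \<le> 0"
  proof -
    have "\<forall>t\<in>{t0..T}. w0 + k*(t-t0) \<le> 0"
    proof
      fix t assume "t \<in> {t0..T}"
      then have "k*(t-t0) \<le> k*(T-t0)" using that by (intro mult_left_mono) auto
      then show "w0 + k*(t-t0) \<le> 0" using that by linarith
    qed
    then show ?thesis using assms by (intro exI[of _ t0] exI[of _ 1]) auto
  qed
  have B: ?thesis if "k \<le> 0" "w0 + k*(T-t0) \<ge> 0"
  proof -
    have "\<forall>t\<in>{t0..T}. w0 + k*(t-t0) \<ge> 0"
    proof
      fix t assume "t \<in> {t0..T}"
      then have "k*(t-t0) \<ge> k*(T-t0)" using that by (intro mult_left_mono_neg) auto
      then show "w0 + k*(t-t0) \<ge> 0" using that by linarith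
    qed
    then show ?thesis using assms by (intro exI[of _ t0] exI[of _ 0]) auto
  qed
  have C: ?thesis if "k > 0" "w0 + k*(T-t0) > 0"
  proof -
    define a where "a = max t0 (t0 - w0/k)"
    have "t0 - w0/k < T" using that by (simp add: field_simps)
    then have "a < T" using assms by (simp add: a_def)
    moreover have "\<forall>t\<in>{a..T}. w0 + k*(t-t0) \<ge> 0"
    proof
      fix t assume "t \<in> {a..T}"
      then have "t0 - w0/k \<le> t" by (simp add: a_def)
      then show "w0 + k*(t-t0) \<ge> 0" using that by (simp add: field_simps)
    qed
    ultimately show ?thesis by (intro exI[of _ a] exI[of _ 0]) (auto simp: a_def)
  qed
  have D: ?thesis if "k < 0" "w0 + k*(T-t0) < 0"
  proof -
    define a where "a = max t0 (t0 - w0/k)"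
    have "t0 - w0/k < T" using that by (simp add: field_simps)
    then have "a < T" using assms by (simp add: a_def)
    moreover have "\<forall>t\<in>{a..T}. w0 + k*(t-t0) \<le> 0"
    proof
      fix t assume "t \<in> {a..T}"
      then have "t0 - w0/k \<le> t" by (simp add: a_def)
      then show "w0 + k*(t-t0) \<le> 0" using that by (simp add: field_simps)
    qed
    ultimately show ?thesis by (intro exI[of _ a] exI[of _ 1]) (auto simp: a_def)
  qed
  show ?thesis using A B C D by (cases "k > 0"; cases "k < 0"; cases "w0 + k*(T-t0) > 0"; cases "w0 + k*(T-t0) < 0") auto
qed

lemma clip_max:
  fixes w0 k t0 T :: real
  assumes "t0 < T"
  shows "\<exists>a m. t0 \<le> a \<and> a < T \<and> (\<forall>t\<in>{a..T}. max 0 (w0 + k*(t-t0)) = m * (w0 + k*(t-t0)))"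
proof -
  obtain a m where "t0 \<le> a" "a < T" "\<forall>t\<in>{a..T}. min 0 (-w0 + (-k)*(t-t0)) = m * (-w0 + (-k)*(t-t0))"
    using clip_min[OF assms, of "-w0" "-k"] by blast
  then show ?thesis
    by (intro exI[of _ a] exI[of _ m]) (auto simp: max_def min_def split: if_splits)
qed

lemma omega_piece:
  assumes "t0 < T"
  shows "\<exists>a m. t0 \<le> a \<and> a < T \<and> (\<forall>t\<in>{a..T}. circ_omega t0 v0 a0 t =
     m * (circ_omega0 v0 a0 + long_acc v0 a0 / (2 * circ_radius v0 a0) * (t - t0)))"
proof (cases "circ_omega0 v0 a0 < 0")
  case True
  then show ?thesis
    using clip_min[OF assms, of "circ_omega0 v0 a0" "long_acc v0 a0 / (2 * circ_radius v0 a0)"]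
    unfolding circ_omega_def Let_def by simp
next
  case False
  then show ?thesis
    using clip_max[OF assms, of "circ_omega0 v0 a0" "long_acc v0 a0 / (2 * circ_radius v0 a0)"]
    unfolding circ_omega_def Let_def by simp
qed

lemma piece:
  assumes traj: "model_traj t0 p0 v0 a0 P" and T: "t0 < T"
  shows "\<exists>a (X::complex\<Rightarrow>complex) (Y::complex\<Rightarrow>complex). t0 \<le> a \<and> a < T \<and> X holomorphic_on UNIV \<and> Y holomorphic_on UNIV \<and>
     (\<forall>t\<in>{a..T}. X (complex_of_real t) = complex_of_real (fst (P t)) \<and>
                  Y (complex_of_real t) = complex_of_real (snd (P t)))"
  using traj unfolding model_traj_def
proof (elim disjE conjE)
  assume H: "\<forall>t\<ge>t0. P t = straight_pos t0 p0 v0 a0 t"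
  define X where "X (z::complex) = of_real (fst p0) + (z - of_real t0) * of_real (fst v0) + ((z - of_real t0)^2 / 2) * of_real (fst a0)" for z
  define Y where "Y (z::complex) = of_real (snd p0) + (z - of_real t0) * of_real (snd v0) + ((z - of_real t0)^2 / 2) * of_real (snd a0)" for z
  have hX: "X holomorphic_on UNIV" "Y holomorphic_on UNIV" unfolding X_def Y_def
    by (auto intro!: holomorphic_intros)
  have eqs: "\<forall>t\<in>{t0..T}. X (complex_of_real t) = complex_of_real (fst (P t)) \<and>
                  Y (complex_of_real t) = complex_of_real (snd (P t))"
    using H by (auto simp: X_def Y_def straight_pos_def)
  show ?thesis using hX eqs T by blast
next
  assume H: "\<forall>t\<ge>t0. P t = circ_pos t0 p0 v0 a0 t"
  obtain a m where a: "t0 \<le> a" "a < T" and m: "\<forall>t\<in>{a..T}. circ_omega t0 v0 a0 t =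
     m * (circ_omega0 v0 a0 + long_acc v0 a0 / (2 * circ_radius v0 a0) * (t - t0))"
    using omega_piece[OF T] by blast
  define al where "al = circ_alpha0 p0 v0 a0"
  define w0 where "w0 = circ_omega0 v0 a0"
  define K where "K = long_acc v0 a0 / (2 * circ_radius v0 a0)"
  define c where "c = circ_center p0 v0 a0"
  define r where "r = circ_radius v0 a0"
  define Th where "Th (z::complex) = of_real al + of_real m * (of_real w0 + of_real K * (z - of_real t0)) * (z - of_real t0)" for z
  define X where "X (z::complex) = of_real (fst c) + of_real r * cos (Th z)" for z
  define Y where "Y (z::complex) = of_real (snd c) + of_real r * sin (Th z)" for z
  have Th: "Th (of_real t) = of_real (al + m * (w0 + K * (t - t0)) * (t - t0))" for t
    by (simp add: Th_def)
  have hX: "X holomorphic_on UNIV" "Y holomorphic_on UNIV" unfolding X_def Y_def Th_def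
    by (auto intro!: holomorphic_intros)
  have eqs: "\<forall>t\<in>{a..T}. X (complex_of_real t) = complex_of_real (fst (P t)) \<and>
                  Y (complex_of_real t) = complex_of_real (snd (P t))"
  proof
    fix t assume t: "t \<in> {a..T}"
    then have Pt: "P t = circ_pos t0 p0 v0 a0 t" using H a by auto
    show "X (complex_of_real t) = complex_of_real (fst (P t)) \<and>
                  Y (complex_of_real t) = complex_of_real (snd (P t))"
      using m t unfolding Pt X_def Y_def Th circ_pos_def Let_def al_def w0_def K_def c_def r_def
      by (auto simp flip: cos_of_real sin_of_real)
  qed
  show ?thesis using hX eqs a by blast
qed

lemma traj_cont:
  assumes traj: "model_traj t0 p0 v0 a0 P"
  shows "continuous_on {t0..} P"
  using traj unfolding model_traj_def
proof (elim disjE conjE)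
  assume H: "\<forall>t\<ge>t0. P t = straight_pos t0 p0 v0 a0 t"
  have "continuous_on {t0..} (straight_pos t0 p0 v0 a0)"
    unfolding straight_pos_def by (intro continuous_intros) auto
  then show ?thesis by (rule continuous_on_cong[THEN iffD1, rotated 2]) (use H in auto)
next
  assume H: "\<forall>t\<ge>t0. P t = circ_pos t0 p0 v0 a0 t"
  have co: "continuous_on {t0..} (circ_omega t0 v0 a0)"
  proof -
    have c1: "continuous_on {t0..} (\<lambda>x. min 0 (w + K*(x-t0)))"
      and c2: "continuous_on {t0..} (\<lambda>x. max 0 (w + K*(x-t0)))" for w K :: real
      by (intro continuous_intros)+
    show ?thesis unfolding circ_omega_def Let_def
      by (cases "circ_omega0 v0 a0 < 0") (simp_all only: if_True if_False c1 c2)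
  qed
  have "continuous_on {t0..} (circ_pos t0 p0 v0 a0)"
    unfolding circ_pos_def Let_def by (intro continuous_intros co)
  then show ?thesis by (rule continuous_on_cong[THEN iffD1, rotated 2]) (use H in auto)
qed


theorem theorem1:
  fixes t0 \<phi> :: real
    and pi0 vi0 ai0 pj0 vj0 aj0 :: "real \<times> real"
    and Pi Pj :: "real \<Rightarrow> real \<times> real"
  assumes phi_pos: "\<phi> > 0"
    and traj_i: "model_traj t0 pi0 vi0 ai0 Pi"
    and traj_j: "model_traj t0 pj0 vj0 aj0 Pj"
    and no_coll_init: "dist (Pi t0) (Pj t0) > \<phi>"
    and finite_TS: "{t. t \<ge> t0 \<and> dist (Pi t) (Pj t) - \<phi> \<le> 0} \<noteq> {}"
  shows "\<exists>tc. t0 \<le> tc \<and> tc < Inf {t. t \<ge> t0 \<and> dist (Pi t) (Pj t) - \<phi> \<le> 0} \<and>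
           (\<forall>s t. tc \<le> s \<and> s < t \<and> t < Inf {t. t \<ge> t0 \<and> dist (Pi t) (Pj t) - \<phi> \<le> 0} \<longrightarrow>
                  dist (Pi t) (Pj t) - \<phi> < dist (Pi s) (Pj s) - \<phi>)"
proof -
  define S where "S = {t. t \<ge> t0 \<and> dist (Pi t) (Pj t) - \<phi> \<le> 0}"
  define T where "T = Inf S"
  define f where "f t = dist (Pi t) (Pj t)" for t
  have cf: "continuous_on {t0..} f"
    unfolding f_def by (intro continuous_intros traj_cont[OF traj_i] traj_cont[OF traj_j])
  have S_eq: "S = {t \<in> {t0..}. f t - \<phi> \<le> (\<lambda>_. 0) t}" by (auto simp: S_def f_def)
  have "closed S" unfolding S_eq
    by (rule continuous_on_closed_Collect_le) (intro continuous_intros cf, simp, simp)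
  moreover have bdd: "bdd_below S" unfolding S_def by (rule bdd_belowI[of _ t0]) auto
  ultimately have TS: "T \<in> S" unfolding T_def
    using closed_contains_Inf[of S] finite_TS by (simp add: S_def)
  have "T \<noteq> t0" using TS no_coll_init by (auto simp: S_def)
  then have T0: "t0 < T" using TS by (auto simp: S_def)
  have fT: "f T \<le> \<phi>" using TS by (auto simp: S_def f_def)
  have fpos: "f t > \<phi>" if "t0 \<le> t" "t < T" for t
  proof (rule ccontr)
    assume "\<not> f t > \<phi>"
    then have "t \<in> S" using that by (auto simp: S_def f_def)
    then have "T \<le> t" unfolding T_def using bdd by (rule cInf_lower)
    with that show False by simp
  qed
  obtain ai Xi Yi where pi: "t0 \<le> ai" "ai < T" "Xi holomorphic_on UNIV" "Yi holomorphic_on UNIV"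
    "\<forall>t\<in>{ai..T}. Xi (complex_of_real t) = complex_of_real (fst (Pi t)) \<and>
                  Yi (complex_of_real t) = complex_of_real (snd (Pi t))"
    using piece[OF traj_i T0] by blast
  obtain aj Xj Yj where pj: "t0 \<le> aj" "aj < T" "Xj holomorphic_on UNIV" "Yj holomorphic_on UNIV"
    "\<forall>t\<in>{aj..T}. Xj (complex_of_real t) = complex_of_real (fst (Pj t)) \<and>
                  Yj (complex_of_real t) = complex_of_real (snd (Pj t))"
    using piece[OF traj_j T0] by blast
  define a where "a = max ai aj"
  define G where "G z = (Xi z - Xj z)^2 + (Yi z - Yj z)^2 - complex_of_real (\<phi>^2)" for z
  define g where "g t = (f t)^2 - \<phi>^2" for t
  have fsq: "(f t)^2 = (fst (Pi t) - fst (Pj t))^2 + (snd (Pi t) - snd (Pj t))^2" for t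
  proof -
    have "f t = sqrt ((fst (Pi t) - fst (Pj t))^2 + (snd (Pi t) - snd (Pj t))^2)"
      unfolding f_def using dist_Pair_Pair[of "fst (Pi t)" "snd (Pi t)" "fst (Pj t)" "snd (Pj t)"]
      by (simp add: dist_real_def)
    then show ?thesis by simp
  qed
  have hG: "G holomorphic_on UNIV" unfolding G_def using pi(3,4) pj(3,4) by (intro holomorphic_intros)
  have eqG: "G (of_real t) = of_real (g t)" if "t \<in> {a..T}" for t
  proof -
    have "t \<in> {ai..T}" "t \<in> {aj..T}" using that by (auto simp: a_def)
    then have e: "Xi (complex_of_real t) = complex_of_real (fst (Pi t))"
      "Yi (complex_of_real t) = complex_of_real (snd (Pi t))"
      "Xj (complex_of_real t) = complex_of_real (fst (Pj t))"
      "Yj (complex_of_real t) = complex_of_real (snd (Pj t))" using pi(5) pj(5) by auto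
    show ?thesis unfolding G_def g_def fsq e by simp
  qed
  have gpos: "g t > 0" if "t \<in> {a..<T}" for t
  proof -
    have "f t > \<phi>" using fpos that pi pj by (auto simp: a_def)
    then have "(f t)^2 > \<phi>^2" using phi_pos by (simp add: power_strict_mono)
    then show ?thesis by (simp add: g_def)
  qed
  have gT: "g T \<le> 0"
  proof -
    have "f T \<ge> 0" by (simp add: f_def)
    then have "(f T)^2 \<le> \<phi>^2" using fT by (simp add: power_mono)
    then show ?thesis by (simp add: g_def)
  qed
  have "a < T" using pi pj by (simp add: a_def)
  obtain c where c: "a \<le> c" "c < T" "\<forall>s t. c \<le> s \<and> s < t \<and> t < T \<longrightarrow> g t < g s"
    using core[OF hG \<open>a < T\<close> eqG gpos gT] by blast
  show ?thesis
    unfolding S_def[symmetric] T_def[symmetric]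
  proof (intro exI[of _ c] conjI allI impI)
    show "t0 \<le> c" using c pi by (simp add: a_def)
    show "c < T" by (rule c(2))
    fix s t assume st: "c \<le> s \<and> s < t \<and> t < T"
    then have "g t < g s" using c by blast
    then have "(f t)^2 < (f s)^2" by (simp add: g_def)
    then have "f t < f s" using power_less_imp_less_base[of "f t" 2 "f s"] by (simp add: f_def)
    then show "dist (Pi t) (Pj t) - \<phi> < dist (Pi s) (Pj s) - \<phi>" by (simp add: f_def)
  qed
qed

end
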